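(* Every reduced $2$-Segal set is equivalent to the simplicial set $\mathrm{ob}\,S^{\square}_\bullet\mathbb{C}$ for some squares category $\mathbb{C}$.
   Context: A squares category is a flat double category (squares uniquely determined by their boundary; we say a boundary "is a square") with a distinguished object $O$ initial in the horizontal category (morphisms $\rightarrowtail$) and terminal in the vertical category (morphisms $\twoheadrightarrow$). $\mathrm{ob}\,S^{\square}_n\mathbb{C}$ is the set of families $(A_{jk})_{0\le j\le k\le n}$ of objects with $A_{jj}=O$, horizontal morphisms $A_{jk}\rightarrowtail A_{j,k+1}$ and vertical morphisms $A_{jk}\twoheadrightarrow A_{j+1,k}$ ($j<k$) such that each unit cell with corners $A_{jk},A_{j,k+1},A_{j+1,k},A_{j+1,k+1}$ ($j<k<n$) is a square; for $\theta:[m]\to[n]$ the simplicial operator sends $(A_{jk})$ to $(A_{\theta(j)\theta(k)})$ with the composite morphisms. A $2$-Segal set is a simplicial set $X$ such that for every $n\ge3$ and $0\le i<j\le n$ the square with vertices $X_n$, $X_{\{i,\dots,j\}}$, $X_{\{0,\dots,i,j,\dots,n\}}$, $X_{\{i,j\}}$ (maps induced by the inclusions of these subsets of $[n]$) is a pullback. It is reduced if $X_0$ is a single point. *)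

theory Defs
  imports Main
begin

record ('o, 'm) cat =
  obj :: "'o set"
  arr :: "'m set"
  c_dom :: "'m \<Rightarrow> 'o"
  c_cod :: "'m \<Rightarrow> 'o"
  comp :: "'m \<Rightarrow> 'm \<Rightarrow> 'm"   (* comp C g f = g \<circ> f *)
  idm :: "'o \<Rightarrow> 'm"

definition hom :: "('o, 'm) cat \<Rightarrow> 'o \<Rightarrow> 'o \<Rightarrow> 'm set" where
  "hom C a b = {f \<in> arr C. c_dom C f = a \<and> c_cod C f = b}"

definition is_category :: "('o, 'm) cat \<Rightarrow> bool" where
  "is_category C \<longleftrightarrow>
     (\<forall>f\<in>arr C. c_dom C f \<in> obj C \<and> c_cod C f \<in> obj C) \<and>
     (\<forall>a\<in>obj C. idm C a \<in> hom C a a) \<and>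
     (\<forall>f\<in>arr C. \<forall>g\<in>arr C. c_cod C f = c_dom C g \<longrightarrow>
         comp C g f \<in> hom C (c_dom C f) (c_cod C g)) \<and>
     (\<forall>f\<in>arr C. comp C f (idm C (c_dom C f)) = f \<and> comp C (idm C (c_cod C f)) f = f) \<and>
     (\<forall>f\<in>arr C. \<forall>g\<in>arr C. \<forall>h\<in>arr C.
         c_cod C f = c_dom C g \<longrightarrow> c_cod C g = c_dom C h \<longrightarrow>
         comp C h (comp C g f) = comp C (comp C h g) f)"

text \<open>A flat double category: a horizontal and a vertical category on the same
  objects together with the predicate "the boundary is a square".
  sq f g u v: top f : A -> B, bottom g : C -> D (horizontal),
  left u : A -> C, right v : B -> D (vertical).\<close>

record ('o, 'h, 'v) dbl =
  hcat :: "('o, 'h) cat"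
  vcat :: "('o, 'v) cat"
  sq :: "'h \<Rightarrow> 'h \<Rightarrow> 'v \<Rightarrow> 'v \<Rightarrow> bool"

definition flat_double_category :: "('o, 'h, 'v) dbl \<Rightarrow> bool" where
  "flat_double_category D \<longleftrightarrow>
     (let H = hcat D; V = vcat D in
       is_category H \<and> is_category V \<and> obj H = obj V \<and>
       (\<forall>f g u v. sq D f g u v \<longrightarrow>
          f \<in> arr H \<and> g \<in> arr H \<and> u \<in> arr V \<and> v \<in> arr V \<and>
          c_dom V u = c_dom H f \<and> c_cod V u = c_dom H g \<and>
          c_dom V v = c_cod H f \<and> c_cod V v = c_cod H g) \<and>
       (\<forall>u\<in>arr V. sq D (idm H (c_dom V u)) (idm H (c_cod V u)) u u) \<and>
       (\<forall>f\<in>arr H. sq D f f (idm V (c_dom H f)) (idm V (c_cod H f))) \<and>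
       (\<forall>f g u v f' g' w. sq D f g u v \<longrightarrow> sq D f' g' v w \<longrightarrow>
          sq D (comp H f' f) (comp H g' g) u w) \<and>
       (\<forall>f g u v h u' v'. sq D f g u v \<longrightarrow> sq D g h u' v' \<longrightarrow>
          sq D f h (comp V u' u) (comp V v' v)))"

definition squares_category :: "('o, 'h, 'v) dbl \<Rightarrow> 'o \<Rightarrow> bool" where
  "squares_category D Z \<longleftrightarrow>
     flat_double_category D \<and> Z \<in> obj (hcat D) \<and>
     (\<forall>A\<in>obj (hcat D). \<exists>!f. f \<in> hom (hcat D) Z A) \<and>
     (\<forall>A\<in>obj (vcat D). \<exists>!u. u \<in> hom (vcat D) A Z)"

text \<open>lev X n = X_n; smap X theta m n : X_n -> X_m for theta : [m] -> [n].\<close>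

record 'x sset =
  lev :: "nat \<Rightarrow> 'x set"
  smap :: "(nat \<Rightarrow> nat) \<Rightarrow> nat \<Rightarrow> nat \<Rightarrow> 'x \<Rightarrow> 'x"

definition simp_op :: "(nat \<Rightarrow> nat) \<Rightarrow> nat \<Rightarrow> nat \<Rightarrow> bool" where
  "simp_op \<theta> m n \<longleftrightarrow> (\<forall>i\<le>m. \<theta> i \<le> n) \<and> (\<forall>i j. i \<le> j \<longrightarrow> j \<le> m \<longrightarrow> \<theta> i \<le> \<theta> j)"

definition is_sset :: "'x sset \<Rightarrow> bool" where
  "is_sset X \<longleftrightarrow>
     (\<forall>\<theta> m n. simp_op \<theta> m n \<longrightarrow> (\<forall>x\<in>lev X n. smap X \<theta> m n x \<in> lev X m)) \<and>
     (\<forall>\<theta> \<theta>' m n. simp_op \<theta> m n \<longrightarrow> (\<forall>i\<le>m. \<theta> i = \<theta>' i) \<longrightarrow>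
        (\<forall>x\<in>lev X n. smap X \<theta> m n x = smap X \<theta>' m n x)) \<and>
     (\<forall>n. \<forall>x\<in>lev X n. smap X id n n x = x) \<and>
     (\<forall>\<phi> \<theta> k m n. simp_op \<phi> k m \<longrightarrow> simp_op \<theta> m n \<longrightarrow>
        (\<forall>x\<in>lev X n. smap X (\<theta> \<circ> \<phi>) k n x = smap X \<phi> k m (smap X \<theta> m n x)))"

definition sset_iso :: "'x sset \<Rightarrow> 'y sset \<Rightarrow> (nat \<Rightarrow> 'x \<Rightarrow> 'y) \<Rightarrow> bool" where
  "sset_iso X Y f \<longleftrightarrow>
     (\<forall>n. bij_betw (f n) (lev X n) (lev Y n)) \<and>
     (\<forall>\<theta> m n. simp_op \<theta> m n \<longrightarrow>
        (\<forall>x\<in>lev X n. f m (smap X \<theta> m n x) = smap Y \<theta> m n (f n x)))"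

definition reduced :: "'x sset \<Rightarrow> bool" where
  "reduced X \<longleftrightarrow> (\<exists>p. lev X 0 = {p})"

text \<open>2-Segal: for n >= 3 and 0 <= i < j <= n, the square
  X_n -> X_{i..j} (= X_{j-i}), X_n -> X_{0..i,j..n} (= X_{n-(j-i)+1}),
  both to X_{i,j} (= X_1), is a pullback of sets.\<close>

definition two_segal :: "'x sset \<Rightarrow> bool" where
  "two_segal X \<longleftrightarrow>
     (\<forall>n i j. 3 \<le> n \<longrightarrow> i < j \<longrightarrow> j \<le> n \<longrightarrow>
       (\<forall>a\<in>lev X (j - i). \<forall>b\<in>lev X (n - (j - i) + 1).
          smap X (\<lambda>t. if t = 0 then 0 else j - i) 1 (j - i) a =
          smap X (\<lambda>t. if t = 0 then i else i + 1) 1 (n - (j - i) + 1) b \<longrightarrow>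
          (\<exists>!x. x \<in> lev X n \<and>
               smap X (\<lambda>t. i + t) (j - i) n x = a \<and>
               smap X (\<lambda>t. if t \<le> i then t else t + (j - i) - 1) (n - (j - i) + 1) n x = b)))"

text \<open>An n-simplex is (A, h, v): A j k the objects (0 <= j <= k <= n),
  h j k : A j k -> A j (k+1) horizontal (j <= k < n),
  v j k : A j k -> A (j+1) k vertical (j < k <= n);
  all entries outside these ranges are fixed to undefined.\<close>

fun hpath :: "('o, 'h) cat \<Rightarrow> (nat \<Rightarrow> nat \<Rightarrow> 'o) \<Rightarrow> (nat \<Rightarrow> nat \<Rightarrow> 'h) \<Rightarrow> nat \<Rightarrow> nat \<Rightarrow> nat \<Rightarrow> 'h" where
  "hpath H A h j k 0 = idm H (A j k)"
| "hpath H A h j k (Suc d) = comp H (h j (k + d)) (hpath H A h j k d)"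

fun vpath :: "('o, 'v) cat \<Rightarrow> (nat \<Rightarrow> nat \<Rightarrow> 'o) \<Rightarrow> (nat \<Rightarrow> nat \<Rightarrow> 'v) \<Rightarrow> nat \<Rightarrow> nat \<Rightarrow> nat \<Rightarrow> 'v" where
  "vpath V A v j k 0 = idm V (A j k)"
| "vpath V A v j k (Suc d) = comp V (v (j + d) k) (vpath V A v j k d)"

definition Ssq_lev :: "('o, 'h, 'v) dbl \<Rightarrow> 'o \<Rightarrow> nat \<Rightarrow>
    ((nat \<Rightarrow> nat \<Rightarrow> 'o) \<times> (nat \<Rightarrow> nat \<Rightarrow> 'h) \<times> (nat \<Rightarrow> nat \<Rightarrow> 'v)) set" where
  "Ssq_lev D Z n = {(A, h, v).
     (\<forall>j k. j \<le> k \<and> k \<le> n \<longrightarrow> A j k \<in> obj (hcat D)) \<and>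
     (\<forall>j\<le>n. A j j = Z) \<and>
     (\<forall>j k. j \<le> k \<and> k < n \<longrightarrow> h j k \<in> hom (hcat D) (A j k) (A j (Suc k))) \<and>
     (\<forall>j k. j < k \<and> k \<le> n \<longrightarrow> v j k \<in> hom (vcat D) (A j k) (A (Suc j) k)) \<and>
     (\<forall>j k. j < k \<and> k < n \<longrightarrow> sq D (h j k) (h (Suc j) k) (v j k) (v j (Suc k))) \<and>
     (\<forall>j k. \<not> (j \<le> k \<and> k \<le> n) \<longrightarrow> A j k = undefined) \<and>
     (\<forall>j k. \<not> (j \<le> k \<and> k < n) \<longrightarrow> h j k = undefined) \<and>
     (\<forall>j k. \<not> (j < k \<and> k \<le> n) \<longrightarrow> v j k = undefined)}"

definition Ssq_map :: "('o, 'h, 'v) dbl \<Rightarrow> (nat \<Rightarrow> nat) \<Rightarrow> nat \<Rightarrow> nat \<Rightarrow>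
    ((nat \<Rightarrow> nat \<Rightarrow> 'o) \<times> (nat \<Rightarrow> nat \<Rightarrow> 'h) \<times> (nat \<Rightarrow> nat \<Rightarrow> 'v)) \<Rightarrow>
    ((nat \<Rightarrow> nat \<Rightarrow> 'o) \<times> (nat \<Rightarrow> nat \<Rightarrow> 'h) \<times> (nat \<Rightarrow> nat \<Rightarrow> 'v))" where
  "Ssq_map D \<theta> m n x = (case x of (A, h, v) \<Rightarrow>
     (\<lambda>j k. if j \<le> k \<and> k \<le> m then A (\<theta> j) (\<theta> k) else undefined,
      \<lambda>j k. if j \<le> k \<and> k < m
             then hpath (hcat D) A h (\<theta> j) (\<theta> k) (\<theta> (Suc k) - \<theta> k) else undefined,
      \<lambda>j k. if j < k \<and> k \<le> m
             then vpath (vcat D) A v (\<theta> j) (\<theta> k) (\<theta> (Suc j) - \<theta> j) else undefined))"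

definition Ssq :: "('o, 'h, 'v) dbl \<Rightarrow> 'o \<Rightarrow>
    ((nat \<Rightarrow> nat \<Rightarrow> 'o) \<times> (nat \<Rightarrow> nat \<Rightarrow> 'h) \<times> (nat \<Rightarrow> nat \<Rightarrow> 'v)) sset" where
  "Ssq D Z = \<lparr> lev = Ssq_lev D Z, smap = Ssq_map D \<rparr>"

end

theory Submission
  imports Defs
begin

definition fc :: "'x sset \<Rightarrow> nat \<Rightarrow> nat list \<Rightarrow> 'x \<Rightarrow> 'x" where
  "fc X n l x = smap X (\<lambda>t. l ! t) (length l - 1) n x"

locale seg =
  fixes X :: "'x sset"
  assumes ss: "is_sset X" and ts: "two_segal X" and rd: "reduced X"
begin

lemma sm_in: "simp_op \<theta> m n \<Longrightarrow> x \<in> lev X n \<Longrightarrow> smap X \<theta> m n x \<in> lev X m"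
  using ss unfolding is_sset_def by blast
lemma sm_cong: "simp_op \<theta> m n \<Longrightarrow> (\<And>i. i \<le> m \<Longrightarrow> \<theta> i = \<theta>' i) \<Longrightarrow> x \<in> lev X n \<Longrightarrow> smap X \<theta> m n x = smap X \<theta>' m n x"
  using ss unfolding is_sset_def by blast
lemma sm_id: "x \<in> lev X n \<Longrightarrow> smap X id n n x = x"
  using ss unfolding is_sset_def by blast
lemma sm_comp: "simp_op \<phi> k m \<Longrightarrow> simp_op \<theta> m n \<Longrightarrow> x \<in> lev X n \<Longrightarrow>
   smap X (\<theta> \<circ> \<phi>) k n x = smap X \<phi> k m (smap X \<theta> m n x)"
  using ss unfolding is_sset_def by blast

definition okl :: "nat list \<Rightarrow> nat \<Rightarrow> bool" where
  "okl l n \<longleftrightarrow> l \<noteq> [] \<and> sorted l \<and> (\<forall>i\<in>set l. i \<le> n)"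

lemma okl_simp[simp]: "okl [] n = False" "okl [a] n = (a \<le> n)"
  "okl (a # b # l) n = (a \<le> b \<and> okl (b # l) n)"
  by (auto simp: okl_def)

lemma simp_op_l: "okl l n \<Longrightarrow> length l = Suc m \<Longrightarrow> simp_op (\<lambda>t. l ! t) m n"
  unfolding okl_def simp_op_def
  by (auto intro: sorted_nth_mono)

lemma simp_op_comp: "simp_op \<phi> k m \<Longrightarrow> simp_op \<theta> m n \<Longrightarrow> simp_op (\<theta> \<circ> \<phi>) k n"
  unfolding simp_op_def by auto

lemma fc_in: "okl l n \<Longrightarrow> length l = Suc m \<Longrightarrow> x \<in> lev X n \<Longrightarrow> fc X n l x \<in> lev X m"
  unfolding fc_def using sm_in simp_op_l by auto

lemma fc_fc: "okl l n \<Longrightarrow> length l = Suc m \<Longrightarrow> okl l' m \<Longrightarrow> length l' = Suc k \<Longrightarrow>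
   x \<in> lev X n \<Longrightarrow> fc X m l' (fc X n l x) = fc X n (map (\<lambda>i. l ! i) l') x"
proof -
  assume a: "okl l n" "length l = Suc m" "okl l' m" "length l' = Suc k" "x \<in> lev X n"
  have "fc X m l' (fc X n l x) = smap X ((\<lambda>t. l ! t) \<circ> (\<lambda>t. l' ! t)) k n x"
    unfolding fc_def using a by (simp add: sm_comp[symmetric] simp_op_l)
  also have "\<dots> = fc X n (map (\<lambda>i. l ! i) l') x"
    unfolding fc_def length_map using a
    by (simp only: a(4) diff_Suc_1, intro sm_cong) (auto intro!: simp_op_l simp_op_comp[of _ k m] simp: okl_def)
  finally show ?thesis .
qed

lemma fc_fc'[simp]: "okl l n \<Longrightarrow> length l = Suc m \<Longrightarrow> okl l' m \<Longrightarrow>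
   x \<in> lev X n \<Longrightarrow> fc X m l' (fc X n l x) = fc X n (map (\<lambda>i. l ! i) l') x"
  using fc_fc[of l n m l' "length l' - 1" x] by (cases l') (auto)

lemma smap_fc: "simp_op \<theta> m n \<Longrightarrow> x \<in> lev X n \<Longrightarrow> smap X \<theta> m n x = fc X n (map \<theta> [0..<Suc m]) x"
  unfolding fc_def length_map length_upt diff_Suc_1 diff_zero
  by (rule sm_cong) (auto simp del: upt_Suc simp: nth_append)

lemma okl_map: "simp_op \<theta> m n \<Longrightarrow> okl l m \<Longrightarrow> okl (map \<theta> l) n"
  unfolding okl_def simp_op_def
  by (auto simp: sorted_iff_nth_mono)

lemma okl_upt: "okl [0..<Suc n] n" by (auto simp del: upt_Suc simp: okl_def)

lemma fc_self: "x \<in> lev X n \<Longrightarrow> fc X n [0..<Suc n] x = x"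
proof -
  assume x: "x \<in> lev X n"
  have "fc X n [0..<Suc n] x = smap X id n n x"
    unfolding fc_def length_upt diff_Suc_1 diff_zero by (rule sm_cong) (auto simp del: upt_Suc simp: simp_op_def x nth_append)
  thus ?thesis using sm_id x by simp
qed

lemma segl: "i < j \<Longrightarrow> j \<le> n \<Longrightarrow>
  map (\<lambda>t. if t \<le> i then t else t + (j-i) - 1) [0..<Suc (n-(j-i)+1)] = [0..<Suc i] @ [j..<Suc n]"
  by (rule nth_equalityI) (auto simp del: upt_Suc simp: nth_append)

lemma segl2: "map (\<lambda>t. i + t) [0..<Suc (j-i)] = [i..<Suc j]" if "i < j"
  by (rule nth_equalityI) (use that in \<open>auto simp del: upt_Suc\<close>)

lemma seg_fc:
  assumes "3 \<le> n" "i < j" "j \<le> n" "a \<in> lev X (j-i)" "b \<in> lev X (n-(j-i)+1)"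
    "fc X (j-i) [0,j-i] a = fc X (n-(j-i)+1) [i,i+1] b"
  shows "\<exists>!x. x \<in> lev X n \<and> fc X n [i..<Suc j] x = a \<and> fc X n ([0..<Suc i] @ [j..<Suc n]) x = b"
proof -
  have so1: "simp_op (\<lambda>t. if t = 0 then 0 else j - i) 1 (j - i)" unfolding simp_op_def by auto
  have so2: "simp_op (\<lambda>t. if t = 0 then i else i + 1) 1 (n - (j - i) + 1)" 
    unfolding simp_op_def using assms by auto
  have so3: "simp_op (\<lambda>t. i + t) (j - i) n" unfolding simp_op_def using assms by auto
  have so4: "simp_op (\<lambda>t. if t \<le> i then t else t + (j - i) - 1) (n - (j - i) + 1) n" 
    unfolding simp_op_def using assms by auto
  have e1: "smap X (\<lambda>t. if t = 0 then 0 else j - i) 1 (j - i) a = fc X (j-i) [0,j-i] a"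
    using smap_fc[OF so1 assms(4)] by (simp add: upt_rec eval_nat_numeral)
  have e2: "smap X (\<lambda>t. if t = 0 then i else i + 1) 1 (n - (j - i) + 1) b = fc X (n-(j-i)+1) [i,i+1] b"
    using smap_fc[OF so2 assms(5)] by (simp add: upt_rec eval_nat_numeral)
  have e3: "x \<in> lev X n \<Longrightarrow> smap X (\<lambda>t. i + t) (j - i) n x = fc X n [i..<Suc j] x" for x
    using smap_fc[OF so3, of x] segl2[OF assms(2)] by simp
  have e4: "x \<in> lev X n \<Longrightarrow> smap X (\<lambda>t. if t \<le> i then t else t + (j - i) - 1) (n - (j - i) + 1) n x
     = fc X n ([0..<Suc i] @ [j..<Suc n]) x" for x
    using smap_fc[OF so4, of x] segl[OF assms(2,3)] by simp
  have "\<exists>!x. x \<in> lev X n \<and> smap X (\<lambda>t. i + t) (j - i) n x = a \<and>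
     smap X (\<lambda>t. if t \<le> i then t else t + (j - i) - 1) (n - (j - i) + 1) n x = b"
    using ts assms e1 e2 unfolding two_segal_def by auto
  then show ?thesis using e3 e4 by (smt (verit))
qed

lemma S3a: "\<sigma> \<in> lev X 2 \<Longrightarrow> \<tau> \<in> lev X 2 \<Longrightarrow> fc X 2 [0,2] \<sigma> = fc X 2 [0,1] \<tau> \<Longrightarrow>
   \<exists>!w. w \<in> lev X 3 \<and> fc X 3 [0,1,2] w = \<sigma> \<and> fc X 3 [0,2,3] w = \<tau>"
  using seg_fc[of 3 0 2 \<sigma> \<tau>] by (simp add: upt_rec eval_nat_numeral)
lemma S3b: "\<sigma> \<in> lev X 2 \<Longrightarrow> \<tau> \<in> lev X 2 \<Longrightarrow> fc X 2 [0,2] \<sigma> = fc X 2 [1,2] \<tau> \<Longrightarrow>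
   \<exists>!w. w \<in> lev X 3 \<and> fc X 3 [1,2,3] w = \<sigma> \<and> fc X 3 [0,1,3] w = \<tau>"
  using seg_fc[of 3 1 3 \<sigma> \<tau>] by (simp add: upt_rec eval_nat_numeral)
lemma S4a: "a \<in> lev X 3 \<Longrightarrow> b \<in> lev X 2 \<Longrightarrow> fc X 3 [0,3] a = fc X 2 [0,1] b \<Longrightarrow>
   \<exists>w. w \<in> lev X 4 \<and> fc X 4 [0,1,2,3] w = a \<and> fc X 4 [0,3,4] w = b"
  using seg_fc[of 4 0 3 a b] by (simp add: upt_rec eval_nat_numeral) blast
lemma S4b: "a \<in> lev X 3 \<Longrightarrow> b \<in> lev X 2 \<Longrightarrow> fc X 3 [0,3] a = fc X 2 [1,2] b \<Longrightarrow>
   \<exists>w. w \<in> lev X 4 \<and> fc X 4 [1,2,3,4] w = a \<and> fc X 4 [0,1,4] w = b"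
  using seg_fc[of 4 1 4 a b] by (simp add: upt_rec eval_nat_numeral) blast
lemma S4c: "a \<in> lev X 2 \<Longrightarrow> b \<in> lev X 3 \<Longrightarrow> fc X 2 [0,2] a = fc X 3 [1,2] b \<Longrightarrow>
   \<exists>w. w \<in> lev X 4 \<and> fc X 4 [1,2,3] w = a \<and> fc X 4 [0,1,3,4] w = b"
  using seg_fc[of 4 1 3 a b] by (simp add: upt_rec eval_nat_numeral) blast

lemma S3a_un: "w \<in> lev X 3 \<Longrightarrow> w' \<in> lev X 3 \<Longrightarrow> fc X 3 [0,1,2] w = fc X 3 [0,1,2] w' \<Longrightarrow>
  fc X 3 [0,2,3] w = fc X 3 [0,2,3] w' \<Longrightarrow> w = w'"
  using S3a[of "fc X 3 [0,1,2] w" "fc X 3 [0,2,3] w"] by (auto simp: fc_in)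
lemma S3b_un: "w \<in> lev X 3 \<Longrightarrow> w' \<in> lev X 3 \<Longrightarrow> fc X 3 [1,2,3] w = fc X 3 [1,2,3] w' \<Longrightarrow>
  fc X 3 [0,1,3] w = fc X 3 [0,1,3] w' \<Longrightarrow> w = w'"
  using S3b[of "fc X 3 [1,2,3] w" "fc X 3 [0,1,3] w"] by (auto simp: fc_in)

lemma fc_self1[simp]: "x \<in> lev X (Suc 0) \<Longrightarrow> fc X (Suc 0) [0,Suc 0] x = x"
  using fc_self[of x 1] by (simp add: upt_rec)
lemma fc_self2[simp]: "x \<in> lev X 2 \<Longrightarrow> fc X 2 [0,Suc 0,2] x = x"
  using fc_self[of x 2] by (simp add: upt_rec eval_nat_numeral)
lemma fc_self3[simp]: "x \<in> lev X 3 \<Longrightarrow> fc X 3 [0,Suc 0,2,3] x = x"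
  using fc_self[of x 3] by (simp add: upt_rec eval_nat_numeral)

lemma Sn: assumes "2 \<le> n" "y \<in> lev X (n-1)" "b \<in> lev X 2" "fc X (n-1) [0,n-1] y = fc X 2 [0,1] b"
  shows "\<exists>!x. x \<in> lev X n \<and> fc X n [0..<n] x = y \<and> fc X n [0,n-1,n] x = b"
proof (cases "n = 2")
  case True
  show ?thesis
  proof (rule ex1I[of _ b])
    show "b \<in> lev X n \<and> fc X n [0..<n] b = y \<and> fc X n [0, n - 1, n] b = b"
      using assms True by (simp add: upt_rec)
    fix x assume "x \<in> lev X n \<and> fc X n [0..<n] x = y \<and> fc X n [0, n - 1, n] x = b"
    then show "x = b" using True fc_self2[of x] by auto
  qed
next
  case False
  then have n3: "3 \<le> n" using assms by simp
  have e1: "[0..<Suc (n-1)] = [0..<n]" using n3 by simp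
  have e2: "[0..<Suc 0] @ [n-1..<Suc n] = [0,n-1,n]" using n3
    by (simp add: upt_rec)
  have e3: "n - (n - 1) + 1 = 2" using n3 by simp
  show ?thesis using seg_fc[of n 0 "n-1" y b] assms n3 unfolding e1 e2 e3 by (simp add: numeral_2_eq_2)
qed

definition pt where "pt = (THE p. lev X 0 = {p})"
definition Zo where "Zo = fc X 0 [0,0] pt"

lemma lev0: "lev X 0 = {pt}"
proof -
  obtain p where "lev X 0 = {p}" using rd unfolding reduced_def by blast
  then show ?thesis unfolding pt_def by simp
qed

lemma pt_in[simp]: "pt \<in> lev X 0" using lev0 by simp

lemma fc_pt: "x \<in> lev X n \<Longrightarrow> a \<le> n \<Longrightarrow> fc X n (replicate (Suc k) a) x = fc X 0 (replicate (Suc k) 0) pt"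
proof -
  assume x: "x \<in> lev X n" "a \<le> n"
  have "fc X n [a] x \<in> lev X 0" using fc_in[of "[a]" n 0 x] x by simp
  then have "fc X n [a] x = pt" using lev0 by simp
  moreover have "fc X 0 (replicate (Suc k) 0) (fc X n [a] x) = fc X n (replicate (Suc k) a) x"
    using x by (subst fc_fc') (auto simp: okl_def map_replicate_const)
  ultimately show ?thesis by simp
qed

lemma diag2[simp]: "x \<in> lev X n \<Longrightarrow> a \<le> n \<Longrightarrow> fc X n [a,a] x = Zo"
  using fc_pt[of x n a 1] unfolding Zo_def by (simp add: numeral_2_eq_2)
lemma diag3: "x \<in> lev X n \<Longrightarrow> a \<le> n \<Longrightarrow> fc X n [a,a,a] x = fc X 0 [0,0,0] pt"
  using fc_pt[of x n a 2] by (simp add: numeral_2_eq_2)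
lemma Zo_in[simp]: "Zo \<in> lev X (Suc 0)"
  unfolding Zo_def by (rule fc_in) auto

end

context seg
begin

lemma deg1: "\<sigma> \<in> lev X 2 \<Longrightarrow> fc X 2 [i,j] \<sigma> = Zo \<Longrightarrow> i \<le> j \<Longrightarrow> j \<le> 2 \<Longrightarrow> okl l (Suc 0) \<Longrightarrow>
   fc X 2 (map (\<lambda>t. [i,j] ! t) l) \<sigma> = fc X 0 (map (\<lambda>_. 0) l) pt"
proof -
  assume a: "\<sigma> \<in> lev X 2" "fc X 2 [i,j] \<sigma> = Zo" "i \<le> j" "j \<le> 2" "okl l (Suc 0)"
  have "fc X 2 (map (\<lambda>t. [i,j] ! t) l) \<sigma> = fc X (Suc 0) l (fc X 2 [i,j] \<sigma>)"
    using a(1,3,4,5) by simp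
  also have "\<dots> = fc X (Suc 0) l (fc X 0 [0,0] pt)" using a(2) unfolding Zo_def by (simp del: diag2)
  also have "\<dots> = fc X 0 (map (\<lambda>t. [0,0] ! t) l) pt" using a by (simp del: diag2)
  also have "map (\<lambda>t. [0,0::nat] ! t) l = map (\<lambda>_. 0) l"
    using a(5) unfolding okl_def by (auto simp: nth_Cons split: nat.splits)
  finally show ?thesis .
qed

lemma U1: assumes "\<sigma> \<in> lev X 2" "fc X 2 [0,1] \<sigma> = Zo" shows "\<sigma> = fc X 2 [0,0,2] \<sigma>"
proof -
  define t where "t = fc X 2 [0,0,1,2] \<sigma>"
  define t' where "t' = fc X 2 [0,1,1,2] \<sigma>"
  have t: "t \<in> lev X 3" "t' \<in> lev X 3" unfolding t_def t'_def using assms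
    by (auto intro!: fc_in)
  have "fc X 3 [0,1,2] t = fc X 0 [0,0,0] pt"
    using deg1[OF assms(1,2), of "[0,0,1]"] assms unfolding t_def by simp
  moreover have "fc X 3 [0,1,2] t' = fc X 0 [0,0,0] pt"
    using deg1[OF assms(1,2), of "[0,1,1]"] assms unfolding t'_def by simp
  moreover have "fc X 3 [0,2,3] t = fc X 3 [0,2,3] t'"
    using assms unfolding t_def t'_def by simp
  ultimately have "t = t'" by (intro S3a_un[OF t]) auto
  then have "fc X 3 [0,1,3] t = fc X 3 [0,1,3] t'" by simp
  then show ?thesis using assms unfolding t_def t'_def by simp
qed

lemma U2: assumes "\<sigma> \<in> lev X 2" "fc X 2 [1,2] \<sigma> = Zo" shows "\<sigma> = fc X 2 [0,2,2] \<sigma>"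
proof -
  define t where "t = fc X 2 [0,1,1,2] \<sigma>"
  define t' where "t' = fc X 2 [0,1,2,2] \<sigma>"
  have t: "t \<in> lev X 3" "t' \<in> lev X 3" unfolding t_def t'_def using assms
    by (auto intro!: fc_in)
  have "fc X 3 [1,2,3] t = fc X 0 [0,0,0] pt"
    using deg1[OF assms(1,2), of "[0,0,1]"] assms unfolding t_def by simp
  moreover have "fc X 3 [1,2,3] t' = fc X 0 [0,0,0] pt"
    using deg1[OF assms(1,2), of "[0,1,1]"] assms unfolding t'_def by simp
  moreover have "fc X 3 [0,1,3] t = fc X 3 [0,1,3] t'"
    using assms unfolding t_def t'_def by simp
  ultimately have "t = t'" by (intro S3b_un[OF t]) auto
  then have "fc X 3 [0,2,3] t = fc X 3 [0,2,3] t'" by simp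
  then show ?thesis using assms unfolding t_def t'_def by simp
qed


definition Hc :: "('x,'x) cat" where
 "Hc = \<lparr>obj = lev X 1, arr = lev X 2, c_dom = fc X 2 [0,1], c_cod = fc X 2 [0,2],
   comp = (\<lambda>g f. fc X 3 [0,1,3] (THE w. w \<in> lev X 3 \<and> fc X 3 [0,1,2] w = f \<and> fc X 3 [0,2,3] w = g)),
   idm = fc X 1 [0,1,1]\<rparr>"

definition Vc :: "('x,'x) cat" where
 "Vc = \<lparr>obj = lev X 1, arr = lev X 2, c_dom = fc X 2 [0,2], c_cod = fc X 2 [1,2],
   comp = (\<lambda>g f. fc X 3 [0,2,3] (THE w. w \<in> lev X 3 \<and> fc X 3 [0,1,3] w = f \<and> fc X 3 [1,2,3] w = g)),
   idm = fc X 1 [0,0,1]\<rparr>"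

lemma Hc_simps: "obj Hc = lev X 1" "arr Hc = lev X 2" "c_dom Hc = fc X 2 [0,1]" "c_cod Hc = fc X 2 [0,2]"
  "idm Hc = fc X 1 [0,1,1]" unfolding Hc_def by simp_all
lemma Vc_simps: "obj Vc = lev X 1" "arr Vc = lev X 2" "c_dom Vc = fc X 2 [0,2]" "c_cod Vc = fc X 2 [1,2]"
  "idm Vc = fc X 1 [0,0,1]" unfolding Vc_def by simp_all

lemma compH_face: assumes w: "w \<in> lev X 3"
  shows "comp Hc (fc X 3 [0,2,3] w) (fc X 3 [0,1,2] w) = fc X 3 [0,1,3] w"
proof -
  have "(THE w'. w' \<in> lev X 3 \<and> fc X 3 [0,1,2] w' = fc X 3 [0,1,2] w \<and> fc X 3 [0,2,3] w' = fc X 3 [0,2,3] w) = w"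
    by (rule the_equality) (use w S3a_un in auto)
  then show ?thesis unfolding Hc_def by simp
qed

lemma compV_face: assumes w: "w \<in> lev X 3"
  shows "comp Vc (fc X 3 [1,2,3] w) (fc X 3 [0,1,3] w) = fc X 3 [0,2,3] w"
proof -
  have "(THE w'. w' \<in> lev X 3 \<and> fc X 3 [0,1,3] w' = fc X 3 [0,1,3] w \<and> fc X 3 [1,2,3] w' = fc X 3 [1,2,3] w) = w"
    by (rule the_equality) (use w S3b_un in auto)
  then show ?thesis unfolding Vc_def by simp
qed

lemma compH_gen: "x \<in> lev X n \<Longrightarrow> okl [a,b,c,d] n \<Longrightarrow>
   comp Hc (fc X n [a,c,d] x) (fc X n [a,b,c] x) = fc X n [a,b,d] x"
  using compH_face[of "fc X n [a,b,c,d] x"] by (simp add: fc_in)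

lemma compV_gen: "x \<in> lev X n \<Longrightarrow> okl [a,b,c,d] n \<Longrightarrow>
   comp Vc (fc X n [b,c,d] x) (fc X n [a,b,d] x) = fc X n [a,c,d] x"
  using compV_face[of "fc X n [a,b,c,d] x"] by (simp add: fc_in)


lemma compH_in: assumes "f \<in> lev X 2" "g \<in> lev X 2" "fc X 2 [0,2] f = fc X 2 [0,1] g"
  shows "comp Hc g f \<in> lev X 2 \<and> fc X 2 [0,1] (comp Hc g f) = fc X 2 [0,1] f \<and> fc X 2 [0,2] (comp Hc g f) = fc X 2 [0,2] g"
proof -
  obtain w where w: "w \<in> lev X 3" "fc X 3 [0,1,2] w = f" "fc X 3 [0,2,3] w = g"
    using S3a[OF assms] by blast
  have "comp Hc g f = fc X 3 [0,1,3] w" using compH_face[OF w(1)] w by simp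
  then show ?thesis using w by (auto simp: fc_in)
qed

lemma compV_in: assumes "f \<in> lev X 2" "g \<in> lev X 2" "fc X 2 [1,2] f = fc X 2 [0,2] g"
  shows "comp Vc g f \<in> lev X 2 \<and> fc X 2 [0,2] (comp Vc g f) = fc X 2 [0,2] f \<and> fc X 2 [1,2] (comp Vc g f) = fc X 2 [1,2] g"
proof -
  obtain w where w: "w \<in> lev X 3" "fc X 3 [1,2,3] w = g" "fc X 3 [0,1,3] w = f"
    using S3b[OF assms(2,1) assms(3)[symmetric]] by blast
  have "comp Vc g f = fc X 3 [0,2,3] w" using compV_face[OF w(1)] w by simp
  then show ?thesis using w by (auto simp: fc_in)
qed

lemma assocH: assumes "f \<in> lev X 2" "g \<in> lev X 2" "h \<in> lev X 2"
  "fc X 2 [0,2] f = fc X 2 [0,1] g" "fc X 2 [0,2] g = fc X 2 [0,1] h"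
  shows "comp Hc h (comp Hc g f) = comp Hc (comp Hc h g) f"
proof -
  obtain w where w: "w \<in> lev X 3" "fc X 3 [0,1,2] w = f" "fc X 3 [0,2,3] w = g"
    using S3a[OF assms(1,2,4)] by blast
  have "fc X 3 [0,3] w = fc X 2 [0,2] (fc X 3 [0,2,3] w)" using w(1) by simp
  also have "\<dots> = fc X 2 [0,1] h" using w(3) assms(5) by simp
  finally have c: "fc X 3 [0,3] w = fc X 2 [0,1] h" .
  obtain W where W: "W \<in> lev X 4" "fc X 4 [0,1,2,3] W = w" "fc X 4 [0,3,4] W = h"
    using S4a[OF w(1) assms(3) c] by blast
  have "fc X 4 [0,1,2] W = fc X 3 [0,1,2] (fc X 4 [0,1,2,3] W)" using W(1) by simp
  then have f: "f = fc X 4 [0,1,2] W" using W(2) w by (simp del: fc_fc')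
  have "fc X 4 [0,2,3] W = fc X 3 [0,2,3] (fc X 4 [0,1,2,3] W)" using W(1) by simp
  then have g: "g = fc X 4 [0,2,3] W" using W(2) w by (simp del: fc_fc')
  show ?thesis unfolding f g W(3)[symmetric] using W(1) by (simp add: compH_gen)
qed

lemma assocV: assumes "f \<in> lev X 2" "g \<in> lev X 2" "h \<in> lev X 2"
  "fc X 2 [1,2] f = fc X 2 [0,2] g" "fc X 2 [1,2] g = fc X 2 [0,2] h"
  shows "comp Vc h (comp Vc g f) = comp Vc (comp Vc h g) f"
proof -
  obtain w where w: "w \<in> lev X 3" "fc X 3 [1,2,3] w = h" "fc X 3 [0,1,3] w = g"
    using S3b[OF assms(3,2) assms(5)[symmetric]] by blast
  have "fc X 3 [0,3] w = fc X 2 [0,2] (fc X 3 [0,1,3] w)" using w(1) by simp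
  also have "\<dots> = fc X 2 [1,2] f" using w(3) assms(4) by simp
  finally have c: "fc X 3 [0,3] w = fc X 2 [1,2] f" .
  obtain W where W: "W \<in> lev X 4" "fc X 4 [1,2,3,4] W = w" "fc X 4 [0,1,4] W = f"
    using S4b[OF w(1) assms(1) c] by blast
  have "fc X 4 [2,3,4] W = fc X 3 [1,2,3] (fc X 4 [1,2,3,4] W)" using W(1) by simp
  then have h: "h = fc X 4 [2,3,4] W" using W(2) w by (simp del: fc_fc')
  have "fc X 4 [1,2,4] W = fc X 3 [0,1,3] (fc X 4 [1,2,3,4] W)" using W(1) by simp
  then have g: "g = fc X 4 [1,2,4] W" using W(2) w by (simp del: fc_fc')
  show ?thesis unfolding h g W(3)[symmetric] using W(1) by (simp add: compV_gen)
qed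

lemma catH: "is_category Hc"
  unfolding is_category_def hom_def Hc_simps
proof (intro conjI ballI impI)
  fix f assume "f \<in> lev X 2" then show "fc X 2 [0,1] f \<in> lev X 1" "fc X 2 [0,2] f \<in> lev X 1"
    by (auto intro!: fc_in)
next
  fix a assume "a \<in> lev X 1" then show "fc X 1 [0, 1, 1] a \<in> {f \<in> lev X 2. fc X 2 [0, 1] f = a \<and> fc X 2 [0, 2] f = a}"
    by (auto intro!: fc_in)
next
  fix f g assume "f \<in> lev X 2" "g \<in> lev X 2" "fc X 2 [0,2] f = fc X 2 [0,1] g"
  then show "comp Hc g f \<in> {h \<in> lev X 2. fc X 2 [0, 1] h = fc X 2 [0, 1] f \<and> fc X 2 [0, 2] h = fc X 2 [0, 2] g}"
    using compH_in by auto
next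
  fix f assume f: "f \<in> lev X 2"
  have "comp Hc (fc X 2 [0,1,2] f) (fc X 2 [0,1,1] f) = fc X 2 [0,1,2] f"
    using compH_gen[OF f, of 0 1 1 2] by simp
  then show "comp Hc f (fc X 1 [0, 1, 1] (fc X 2 [0, 1] f)) = f" using f by simp
  have "comp Hc (fc X 2 [0,2,2] f) (fc X 2 [0,1,2] f) = fc X 2 [0,1,2] f"
    using compH_gen[OF f, of 0 1 2 2] by simp
  then show "comp Hc (fc X 1 [0, 1, 1] (fc X 2 [0, 2] f)) f = f" using f by simp
next
  fix f g h assume "f \<in> lev X 2" "g \<in> lev X 2" "h \<in> lev X 2"
    "fc X 2 [0,2] f = fc X 2 [0,1] g" "fc X 2 [0,2] g = fc X 2 [0,1] h"
  then show "comp Hc h (comp Hc g f) = comp Hc (comp Hc h g) f" by (rule assocH)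
qed

lemma catV: "is_category Vc"
  unfolding is_category_def hom_def Vc_simps
proof (intro conjI ballI impI)
  fix f assume "f \<in> lev X 2" then show "fc X 2 [0,2] f \<in> lev X 1" "fc X 2 [1,2] f \<in> lev X 1"
    by (auto intro!: fc_in)
next
  fix a assume "a \<in> lev X 1" then show "fc X 1 [0, 0, 1] a \<in> {f \<in> lev X 2. fc X 2 [0, 2] f = a \<and> fc X 2 [1, 2] f = a}"
    by (auto intro!: fc_in)
next
  fix f g assume "f \<in> lev X 2" "g \<in> lev X 2" "fc X 2 [1,2] f = fc X 2 [0,2] g"
  then show "comp Vc g f \<in> {h \<in> lev X 2. fc X 2 [0, 2] h = fc X 2 [0, 2] f \<and> fc X 2 [1, 2] h = fc X 2 [1, 2] g}"
    using compV_in by auto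
next
  fix f assume f: "f \<in> lev X 2"
  have "comp Vc (fc X 2 [0,1,2] f) (fc X 2 [0,0,2] f) = fc X 2 [0,1,2] f"
    using compV_gen[OF f, of 0 0 1 2] by simp
  then show "comp Vc f (fc X 1 [0, 0, 1] (fc X 2 [0, 2] f)) = f" using f by simp
  have "comp Vc (fc X 2 [1,1,2] f) (fc X 2 [0,1,2] f) = fc X 2 [0,1,2] f"
    using compV_gen[OF f, of 0 1 1 2] by simp
  then show "comp Vc (fc X 1 [0, 0, 1] (fc X 2 [1, 2] f)) f = f" using f by simp
next
  fix f g h assume "f \<in> lev X 2" "g \<in> lev X 2" "h \<in> lev X 2"
    "fc X 2 [1,2] f = fc X 2 [0,2] g" "fc X 2 [1,2] g = fc X 2 [0,2] h"
  then show "comp Vc h (comp Vc g f) = comp Vc (comp Vc h g) f" by (rule assocV)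
qed


definition sqp :: "'x \<Rightarrow> 'x \<Rightarrow> 'x \<Rightarrow> 'x \<Rightarrow> bool" where
  "sqp f g u v \<longleftrightarrow> (\<exists>w\<in>lev X 3. fc X 3 [0,2,3] w = f \<and> fc X 3 [1,2,3] w = g \<and>
      fc X 3 [0,1,2] w = u \<and> fc X 3 [0,1,3] w = v)"

definition DD :: "('x,'x,'x) dbl" where "DD = \<lparr>hcat = Hc, vcat = Vc, sq = sqp\<rparr>"

lemma sqpI: "w \<in> lev X 3 \<Longrightarrow> sqp (fc X 3 [0,2,3] w) (fc X 3 [1,2,3] w) (fc X 3 [0,1,2] w) (fc X 3 [0,1,3] w)"
  unfolding sqp_def by blast

lemma sqp_hcomp: assumes "sqp f g u v" "sqp f' g' v w" shows "sqp (comp Hc f' f) (comp Hc g' g) u w"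
proof -
  obtain P where P: "P \<in> lev X 3" "fc X 3 [0,2,3] P = f" "fc X 3 [1,2,3] P = g" "fc X 3 [0,1,2] P = u" "fc X 3 [0,1,3] P = v"
    using assms(1) unfolding sqp_def by blast
  obtain Q where Q: "Q \<in> lev X 3" "fc X 3 [0,2,3] Q = f'" "fc X 3 [1,2,3] Q = g'" "fc X 3 [0,1,2] Q = v" "fc X 3 [0,1,3] Q = w"
    using assms(2) unfolding sqp_def by blast
  have "fc X 2 [0,2] (fc X 3 [1,2,3] P) = fc X 3 [1,3] P" using P(1) by simp
  also have "\<dots> = fc X 2 [1,2] (fc X 3 [0,1,3] P)" using P(1) by simp
  also have "\<dots> = fc X 2 [1,2] (fc X 3 [0,1,2] Q)" using P(5) Q(4) by simp
  also have "\<dots> = fc X 3 [1,2] Q" using Q(1) by simp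
  finally have c: "fc X 2 [0,2] (fc X 3 [1,2,3] P) = fc X 3 [1,2] Q" .
  obtain W where W: "W \<in> lev X 4" "fc X 4 [1,2,3] W = fc X 3 [1,2,3] P" "fc X 4 [0,1,3,4] W = Q"
    using S4c[OF fc_in[OF _ _ P(1)] Q(1) c] by auto
  have PW: "P = fc X 4 [0,1,2,3] W"
  proof (rule S3b_un[OF P(1)])
    show "fc X 4 [0,1,2,3] W \<in> lev X 3" using W(1) by (simp add: fc_in)
    show "fc X 3 [1,2,3] P = fc X 3 [1,2,3] (fc X 4 [0,1,2,3] W)" using W(1,2) by simp
    have "fc X 3 [0,1,3] (fc X 4 [0,1,2,3] W) = fc X 3 [0,1,2] (fc X 4 [0,1,3,4] W)" using W(1) by simp
    then show "fc X 3 [0,1,3] P = fc X 3 [0,1,3] (fc X 4 [0,1,2,3] W)" using P(5) Q(4) W(3) by simp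
  qed
  have "sqp (comp Hc (fc X 3 [0,2,3] Q) (fc X 3 [0,2,3] P)) (comp Hc (fc X 3 [1,2,3] Q) (fc X 3 [1,2,3] P))
     (fc X 3 [0,1,2] P) (fc X 3 [0,1,3] Q)"
    unfolding PW W(3)[symmetric] using sqpI[OF fc_in[of "[0,1,2,4]" 4 3 W]] W(1) by (simp add: compH_gen)
  then show ?thesis using P Q by simp
qed

lemma sqp_vcomp: assumes "sqp f g u v" "sqp g h u' v'" shows "sqp f h (comp Vc u' u) (comp Vc v' v)"
proof -
  obtain P where P: "P \<in> lev X 3" "fc X 3 [0,2,3] P = f" "fc X 3 [1,2,3] P = g" "fc X 3 [0,1,2] P = u" "fc X 3 [0,1,3] P = v"
    using assms(1) unfolding sqp_def by blast
  obtain Q where Q: "Q \<in> lev X 3" "fc X 3 [0,2,3] Q = g" "fc X 3 [1,2,3] Q = h" "fc X 3 [0,1,2] Q = u'" "fc X 3 [0,1,3] Q = v'"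
    using assms(2) unfolding sqp_def by blast
  have "fc X 3 [0,3] Q = fc X 2 [0,2] (fc X 3 [0,2,3] Q)" using Q(1) by simp
  also have "\<dots> = fc X 2 [0,2] (fc X 3 [1,2,3] P)" using P(3) Q(2) by simp
  also have "\<dots> = fc X 2 [1,2] (fc X 3 [0,1,3] P)" using P(1) by simp
  finally have c: "fc X 3 [0,3] Q = fc X 2 [1,2] (fc X 3 [0,1,3] P)" .
  obtain W where W: "W \<in> lev X 4" "fc X 4 [1,2,3,4] W = Q" "fc X 4 [0,1,4] W = fc X 3 [0,1,3] P"
    using S4b[OF Q(1) fc_in[OF _ _ P(1)] c] by auto
  have PW: "P = fc X 4 [0,1,3,4] W"
  proof (rule S3b_un[OF P(1)])
    show "fc X 4 [0,1,3,4] W \<in> lev X 3" using W(1) by (simp add: fc_in)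
    have "fc X 3 [1,2,3] (fc X 4 [0,1,3,4] W) = fc X 3 [0,2,3] (fc X 4 [1,2,3,4] W)" using W(1) by simp
    then show "fc X 3 [1,2,3] P = fc X 3 [1,2,3] (fc X 4 [0,1,3,4] W)" using P(3) Q(2) W(2) by simp
    show "fc X 3 [0,1,3] P = fc X 3 [0,1,3] (fc X 4 [0,1,3,4] W)" using W(1,3) by simp
  qed
  have "sqp (fc X 3 [0,2,3] P) (fc X 3 [1,2,3] Q) (comp Vc (fc X 3 [0,1,2] Q) (fc X 3 [0,1,2] P))
     (comp Vc (fc X 3 [0,1,3] Q) (fc X 3 [0,1,3] P))"
    unfolding PW W(2)[symmetric] using sqpI[OF fc_in[of "[0,2,3,4]" 4 3 W]] W(1) by (simp add: compV_gen)
  then show ?thesis using P Q by simp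
qed

lemma flatD: "flat_double_category DD"
  unfolding flat_double_category_def Let_def DD_def dbl.simps
proof (intro conjI allI impI ballI)
  show "is_category Hc" by (rule catH)
  show "is_category Vc" by (rule catV)
  show "obj Hc = obj Vc" by (simp add: Hc_simps Vc_simps)
next
  fix f g u v assume "sqp f g u v"
  then obtain w where w: "w \<in> lev X 3" "fc X 3 [0,2,3] w = f" "fc X 3 [1,2,3] w = g" "fc X 3 [0,1,2] w = u" "fc X 3 [0,1,3] w = v"
    unfolding sqp_def by blast
  show "f \<in> arr Hc" "g \<in> arr Hc" "u \<in> arr Vc" "v \<in> arr Vc" using w by (auto simp: Hc_simps Vc_simps fc_in)
  show "c_dom Vc u = c_dom Hc f" "c_cod Vc u = c_dom Hc g" "c_dom Vc v = c_cod Hc f" "c_cod Vc v = c_cod Hc g"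
    unfolding Hc_simps Vc_simps w(2-5)[symmetric] using w(1) by simp_all
next
  fix u assume u: "u \<in> arr Vc"
  have "sqp (fc X 2 [0,2,2] u) (fc X 2 [1,2,2] u) (fc X 2 [0,1,2] u) (fc X 2 [0,1,2] u)"
    using sqpI[OF fc_in[of "[0,1,2,2]" 2 3 u]] u by (simp add: Vc_simps)
  then show "sqp (idm Hc (c_dom Vc u)) (idm Hc (c_cod Vc u)) u u" using u by (simp add: Hc_simps Vc_simps)
next
  fix f assume f: "f \<in> arr Hc"
  have "sqp (fc X 2 [0,1,2] f) (fc X 2 [0,1,2] f) (fc X 2 [0,0,1] f) (fc X 2 [0,0,2] f)"
    using sqpI[OF fc_in[of "[0,0,1,2]" 2 3 f]] f by (simp add: Hc_simps)
  then show "sqp f f (idm Vc (c_dom Hc f)) (idm Vc (c_cod Hc f))" using f by (simp add: Hc_simps Vc_simps)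
next
  fix f g u v f' g' w assume "sqp f g u v" "sqp f' g' v w"
  then show "sqp (comp Hc f' f) (comp Hc g' g) u w" by (rule sqp_hcomp)
next
  fix f g u v h u' v' assume "sqp f g u v" "sqp g h u' v'"
  then show "sqp f h (comp Vc u' u) (comp Vc v' v)" by (rule sqp_vcomp)
qed

lemma sqcat: "squares_category DD Zo"
  unfolding squares_category_def
proof (intro conjI ballI)
  show "flat_double_category DD" by (rule flatD)
  show "Zo \<in> obj (hcat DD)" by (simp add: DD_def Hc_simps)
next
  fix A assume "A \<in> obj (hcat DD)"
  then have A: "A \<in> lev X 1" by (simp add: DD_def Hc_simps)
  show "\<exists>!f. f \<in> hom (hcat DD) Zo A"
  proof (rule ex1I[of _ "fc X 1 [0,0,1] A"])
    show "fc X 1 [0,0,1] A \<in> hom (hcat DD) Zo A" using A by (auto simp: DD_def Hc_simps hom_def intro!: fc_in)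
    fix f assume "f \<in> hom (hcat DD) Zo A"
    then have f: "f \<in> lev X 2" "fc X 2 [0,1] f = Zo" "fc X 2 [0,2] f = A" by (auto simp: DD_def Hc_simps hom_def)
    have "f = fc X 2 [0,0,2] f" by (rule U1[OF f(1,2)])
    also have "\<dots> = fc X 1 [0,0,1] (fc X 2 [0,2] f)" using f(1) by simp
    finally show "f = fc X 1 [0,0,1] A" using f(3) by simp
  qed
next
  fix A assume "A \<in> obj (vcat DD)"
  then have A: "A \<in> lev X 1" by (simp add: DD_def Vc_simps)
  show "\<exists>!f. f \<in> hom (vcat DD) A Zo"
  proof (rule ex1I[of _ "fc X 1 [0,1,1] A"])
    show "fc X 1 [0,1,1] A \<in> hom (vcat DD) A Zo" using A by (auto simp: DD_def Vc_simps hom_def intro!: fc_in)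
    fix f assume "f \<in> hom (vcat DD) A Zo"
    then have f: "f \<in> lev X 2" "fc X 2 [1,2] f = Zo" "fc X 2 [0,2] f = A" by (auto simp: DD_def Vc_simps hom_def)
    have "f = fc X 2 [0,2,2] f" by (rule U2[OF f(1,2)])
    also have "\<dots> = fc X 1 [0,1,1] (fc X 2 [0,2] f)" using f(1) by simp
    finally show "f = fc X 1 [0,1,1] A" using f(3) by simp
  qed
qed


lemma DD_simps[simp]: "hcat DD = Hc" "vcat DD = Vc" "sq DD = sqp" unfolding DD_def by simp_all

lemma homH: "hom Hc a b = {f \<in> lev X 2. fc X 2 [0,1] f = a \<and> fc X 2 [0,2] f = b}"
  unfolding hom_def Hc_simps by simp
lemma homV: "hom Vc a b = {f \<in> lev X 2. fc X 2 [0,2] f = a \<and> fc X 2 [1,2] f = b}"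
  unfolding hom_def Vc_simps by simp

lemma initH: "f \<in> hom Hc Zo A \<Longrightarrow> f = fc X 1 [0,0,1] A"
proof -
  assume "f \<in> hom Hc Zo A"
  then have f: "f \<in> lev X 2" "fc X 2 [0,1] f = Zo" "fc X 2 [0,2] f = A" by (auto simp: homH)
  have "f = fc X 2 [0,0,2] f" by (rule U1[OF f(1,2)])
  also have "\<dots> = fc X 1 [0,0,1] (fc X 2 [0,2] f)" using f(1) by simp
  finally show "f = fc X 1 [0,0,1] A" using f(3) by simp
qed

lemma termV: "f \<in> hom Vc A Zo \<Longrightarrow> f = fc X 1 [0,1,1] A"
proof -
  assume "f \<in> hom Vc A Zo"
  then have f: "f \<in> lev X 2" "fc X 2 [1,2] f = Zo" "fc X 2 [0,2] f = A" by (auto simp: homV)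
  have "f = fc X 2 [0,2,2] f" by (rule U2[OF f(1,2)])
  also have "\<dots> = fc X 1 [0,1,1] (fc X 2 [0,2] f)" using f(1) by simp
  finally show "f = fc X 1 [0,1,1] A" using f(3) by simp
qed

definition FA :: "nat \<Rightarrow> 'x \<Rightarrow> nat \<Rightarrow> nat \<Rightarrow> 'x" where
  "FA n x = (\<lambda>j k. if j \<le> k \<and> k \<le> n then fc X n [j,k] x else undefined)"
definition Fh :: "nat \<Rightarrow> 'x \<Rightarrow> nat \<Rightarrow> nat \<Rightarrow> 'x" where
  "Fh n x = (\<lambda>j k. if j \<le> k \<and> k < n then fc X n [j,k,Suc k] x else undefined)"
definition Fv :: "nat \<Rightarrow> 'x \<Rightarrow> nat \<Rightarrow> nat \<Rightarrow> 'x" where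
  "Fv n x = (\<lambda>j k. if j < k \<and> k \<le> n then fc X n [j,Suc j,k] x else undefined)"
definition Fm where "Fm n x = (FA n x, Fh n x, Fv n x)"

lemma hpath_F: "x \<in> lev X n \<Longrightarrow> a \<le> b \<Longrightarrow> b + d \<le> n \<Longrightarrow>
  hpath Hc (FA n x) (Fh n x) a b d = fc X n [a,b,b+d] x"
proof (induction d)
  case 0
  then show ?case by (simp add: FA_def Hc_simps)
next
  case (Suc d)
  then have "hpath Hc (FA n x) (Fh n x) a b (Suc d) = comp Hc (fc X n [a,b+d,Suc (b+d)] x) (fc X n [a,b,b+d] x)"
    by (simp add: Fh_def)
  also have "\<dots> = fc X n [a,b,Suc (b+d)] x" using Suc.prems by (intro compH_gen) auto
  finally show ?case by simp
qed

lemma vpath_F: "x \<in> lev X n \<Longrightarrow> a + d \<le> b \<Longrightarrow> b \<le> n \<Longrightarrow>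
  vpath Vc (FA n x) (Fv n x) a b d = fc X n [a,a+d,b] x"
proof (induction d)
  case 0
  then show ?case by (simp add: FA_def Vc_simps)
next
  case (Suc d)
  then have "vpath Vc (FA n x) (Fv n x) a b (Suc d) = comp Vc (fc X n [a+d,Suc (a+d),b] x) (fc X n [a,a+d,b] x)"
    by (simp add: Fv_def)
  also have "\<dots> = fc X n [a,Suc (a+d),b] x" using Suc.prems by (intro compV_gen) auto
  finally show ?case by simp
qed

lemma fc_smap: "simp_op \<theta> m n \<Longrightarrow> x \<in> lev X n \<Longrightarrow> okl l m \<Longrightarrow> fc X m l (smap X \<theta> m n x) = fc X n (map \<theta> l) x"
proof -
  assume a: "simp_op \<theta> m n" "x \<in> lev X n" "okl l m"
  have "fc X m l (smap X \<theta> m n x) = fc X m l (fc X n (map \<theta> [0..<Suc m]) x)" using smap_fc a by simp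
  also have "\<dots> = fc X n (map (\<lambda>i. map \<theta> [0..<Suc m] ! i) l) x"
    using a by (intro fc_fc') (auto intro: okl_map okl_upt simp del: upt_Suc)
  also have "map (\<lambda>i. map \<theta> [0..<Suc m] ! i) l = map \<theta> l"
    using a(3) unfolding okl_def by (auto simp del: upt_Suc simp: nth_append less_Suc_eq_le)
  finally show ?thesis .
qed

lemma natural: assumes th: "simp_op \<theta> m n" and x: "x \<in> lev X n"
  shows "Fm m (smap X \<theta> m n x) = Ssq_map DD \<theta> m n (Fm n x)"
proof -
  have mono: "\<And>i j. i \<le> j \<Longrightarrow> j \<le> m \<Longrightarrow> \<theta> i \<le> \<theta> j" and bd: "\<And>i. i \<le> m \<Longrightarrow> \<theta> i \<le> n"
    using th unfolding simp_op_def by auto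
  have sx: "smap X \<theta> m n x \<in> lev X m" using sm_in th x by blast
  have 1: "FA m (smap X \<theta> m n x) = (\<lambda>j k. if j \<le> k \<and> k \<le> m then FA n x (\<theta> j) (\<theta> k) else undefined)"
  proof (intro ext)
    fix j k show "FA m (smap X \<theta> m n x) j k = (if j \<le> k \<and> k \<le> m then FA n x (\<theta> j) (\<theta> k) else undefined)"
    proof (cases "j \<le> k \<and> k \<le> m")
      case True
      have "\<theta> j \<le> \<theta> k" "\<theta> k \<le> n" using True mono bd by auto
      then show ?thesis using True by (simp add: FA_def fc_smap[OF th x])
    qed (auto simp: FA_def)
  qed
  have 2: "Fh m (smap X \<theta> m n x) = (\<lambda>j k. if j \<le> k \<and> k < m
             then hpath Hc (FA n x) (Fh n x) (\<theta> j) (\<theta> k) (\<theta> (Suc k) - \<theta> k) else undefined)"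
  proof (intro ext)
    fix j k show "Fh m (smap X \<theta> m n x) j k = (if j \<le> k \<and> k < m
             then hpath Hc (FA n x) (Fh n x) (\<theta> j) (\<theta> k) (\<theta> (Suc k) - \<theta> k) else undefined)"
    proof (cases "j \<le> k \<and> k < m")
      case True
      have "\<theta> j \<le> \<theta> k" "\<theta> k \<le> \<theta> (Suc k)" "\<theta> (Suc k) \<le> n" using True mono bd by auto
      then have "hpath Hc (FA n x) (Fh n x) (\<theta> j) (\<theta> k) (\<theta> (Suc k) - \<theta> k) = fc X n [\<theta> j, \<theta> k, \<theta> (Suc k)] x"
        using hpath_F[OF x, of "\<theta> j" "\<theta> k" "\<theta> (Suc k) - \<theta> k"] by simp
      then show ?thesis using True by (simp add: Fh_def fc_smap[OF th x])
    qed (auto simp: Fh_def)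
  qed
  have 3: "Fv m (smap X \<theta> m n x) = (\<lambda>j k. if j < k \<and> k \<le> m
             then vpath Vc (FA n x) (Fv n x) (\<theta> j) (\<theta> k) (\<theta> (Suc j) - \<theta> j) else undefined)"
  proof (intro ext)
    fix j k show "Fv m (smap X \<theta> m n x) j k = (if j < k \<and> k \<le> m
             then vpath Vc (FA n x) (Fv n x) (\<theta> j) (\<theta> k) (\<theta> (Suc j) - \<theta> j) else undefined)"
    proof (cases "j < k \<and> k \<le> m")
      case True
      have "\<theta> j \<le> \<theta> (Suc j)" "\<theta> (Suc j) \<le> \<theta> k" "\<theta> k \<le> n" using True mono bd by auto
      then have "vpath Vc (FA n x) (Fv n x) (\<theta> j) (\<theta> k) (\<theta> (Suc j) - \<theta> j) = fc X n [\<theta> j, \<theta> (Suc j), \<theta> k] x"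
        using vpath_F[OF x, of "\<theta> j" "\<theta> (Suc j) - \<theta> j" "\<theta> k"] by simp
      then show ?thesis using True by (simp add: Fv_def fc_smap[OF th x])
    qed (auto simp: Fv_def)
  qed
  show ?thesis unfolding Fm_def Ssq_map_def DD_simps using 1 2 3 by simp
qed


lemma Fm_in: assumes x: "x \<in> lev X n" shows "Fm n x \<in> Ssq_lev DD Zo n"
  unfolding Ssq_lev_def Fm_def DD_simps
proof (simp only: mem_Collect_eq prod.case, intro conjI allI impI)
  fix j k assume a: "j \<le> k \<and> k \<le> n"
  then show "FA n x j k \<in> obj Hc" using x by (simp add: FA_def Hc_simps fc_in)
next
  fix j assume "j \<le> n" then show "FA n x j j = Zo" using x by (simp add: FA_def)
next
  fix j k assume a: "j \<le> k \<and> k < n"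
  then show "Fh n x j k \<in> hom Hc (FA n x j k) (FA n x j (Suc k))"
    using x by (simp add: FA_def Fh_def homH fc_in)
next
  fix j k assume a: "j < k \<and> k \<le> n"
  then show "Fv n x j k \<in> hom Vc (FA n x j k) (FA n x (Suc j) k)"
    using x by (simp add: FA_def Fv_def homV fc_in)
next
  fix j k assume a: "j < k \<and> k < n"
  have "sqp (fc X 3 [0,2,3] (fc X n [j,Suc j,k,Suc k] x)) (fc X 3 [1,2,3] (fc X n [j,Suc j,k,Suc k] x))
    (fc X 3 [0,1,2] (fc X n [j,Suc j,k,Suc k] x)) (fc X 3 [0,1,3] (fc X n [j,Suc j,k,Suc k] x))"
    using a x by (intro sqpI fc_in) auto
  then show "sqp (Fh n x j k) (Fh n x (Suc j) k) (Fv n x j k) (Fv n x j (Suc k))"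
    using a x by (simp add: Fh_def Fv_def)
qed (auto simp: FA_def Fh_def Fv_def)

lemma restr: "x \<in> lev X n \<Longrightarrow> 0 < n \<Longrightarrow> okl l (n - 1) \<Longrightarrow> fc X (n - 1) l (fc X n [0..<n] x) = fc X n l x"
proof -
  assume a: "x \<in> lev X n" "0 < n" "okl l (n - 1)"
  have "okl [0..<n] n" using a(2) by (auto simp: okl_def)
  then have "fc X (n - 1) l (fc X n [0..<n] x) = fc X n (map (\<lambda>i. [0..<n] ! i) l) x"
    using a by (intro fc_fc') auto
  also have "map (\<lambda>i. [0..<n] ! i) l = l" using a(2,3) unfolding okl_def
    by (intro map_idI) auto
  finally show ?thesis .
qed

lemma Fm_inj: "x \<in> lev X n \<Longrightarrow> x' \<in> lev X n \<Longrightarrow> (\<And>k. k < n \<Longrightarrow> fc X n [0,k,Suc k] x = fc X n [0,k,Suc k] x') \<Longrightarrow> x = x'"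
proof (induction n arbitrary: x x')
  case 0
  then show ?case using lev0 by auto
next
  case (Suc m)
  show ?case
  proof (cases m)
    case 0
    have "fc X 1 [0,0,1] x = fc X 1 [0,0,1] x'" using Suc.prems(3)[of 0] 0 by simp
    then have "fc X 2 [0,2] (fc X 1 [0,0,1] x) = fc X 2 [0,2] (fc X 1 [0,0,1] x')" by simp
    then show ?thesis using Suc.prems(1,2) 0 by simp
  next
    case (Suc m')
    note mS = this
    let ?n = "Suc m"
    have n2: "2 \<le> ?n" using mS by simp
    have y: "fc X ?n [0..<?n] x \<in> lev X m" "fc X ?n [0..<?n] x' \<in> lev X m"
      using Suc.prems(1,2) by (auto intro!: fc_in simp: okl_def simp del: upt_Suc)
    have "fc X ?n [0..<?n] x = fc X ?n [0..<?n] x'"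
    proof (rule Suc.IH[OF y])
      fix k assume k: "k < m"
      have "fc X m [0,k,Suc k] (fc X ?n [0..<?n] x) = fc X ?n [0,k,Suc k] x"
        using restr[OF Suc.prems(1), of "[0,k,Suc k]"] k by simp
      moreover have "fc X m [0,k,Suc k] (fc X ?n [0..<?n] x') = fc X ?n [0,k,Suc k] x'"
        using restr[OF Suc.prems(2), of "[0,k,Suc k]"] k by simp
      ultimately show "fc X m [0,k,Suc k] (fc X ?n [0..<?n] x) = fc X m [0,k,Suc k] (fc X ?n [0..<?n] x')"
        using Suc.prems(3)[of k] k by simp
    qed
    moreover have "fc X ?n [0,m,?n] x = fc X ?n [0,m,?n] x'" using Suc.prems(3)[of m] by simp
    moreover
    have y1: "fc X ?n [0..<?n] x \<in> lev X (?n - 1)" using y by simp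
    have b1: "fc X ?n [0,m,?n] x \<in> lev X 2" using Suc.prems(1) by (intro fc_in) auto
    have c: "fc X (?n - 1) [0, ?n - 1] (fc X ?n [0..<?n] x) = fc X 2 [0,1] (fc X ?n [0,m,?n] x)"
      using restr[OF Suc.prems(1), of "[0,m]"] Suc.prems(1) by simp
    have "\<exists>!z. z \<in> lev X ?n \<and> fc X ?n [0..<?n] z = fc X ?n [0..<?n] x \<and> fc X ?n [0,?n-1,?n] z = fc X ?n [0,m,?n] x"
      by (rule Sn[OF n2 y1 b1 c])
    then have "\<exists>!z. z \<in> lev X ?n \<and> fc X ?n [0..<?n] z = fc X ?n [0..<?n] x \<and> fc X ?n [0,m,?n] z = fc X ?n [0,m,?n] x"
      by (simp only: diff_Suc_1)
    note E = this
    have px: "x \<in> lev X ?n \<and> fc X ?n [0..<?n] x = fc X ?n [0..<?n] x \<and> fc X ?n [0,m,?n] x = fc X ?n [0,m,?n] x"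
      using Suc.prems(1) by simp
    have px': "x' \<in> lev X ?n \<and> fc X ?n [0..<?n] x' = fc X ?n [0..<?n] x \<and> fc X ?n [0,m,?n] x' = fc X ?n [0,m,?n] x"
      using Suc.prems(2) calculation by simp
    show ?thesis using the1_equality[OF E px] the1_equality[OF E px'] by simp
  qed
qed


lemma SsqD: assumes "(A,h,v) \<in> Ssq_lev DD Zo n"
  shows SA: "\<And>j k. j \<le> k \<Longrightarrow> k \<le> n \<Longrightarrow> A j k \<in> lev X 1"
    and SZ: "\<And>j. j \<le> n \<Longrightarrow> A j j = Zo"
    and Sh: "\<And>j k. j \<le> k \<Longrightarrow> k < n \<Longrightarrow> h j k \<in> lev X 2 \<and> fc X 2 [0,1] (h j k) = A j k \<and> fc X 2 [0,2] (h j k) = A j (Suc k)"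
    and Sv: "\<And>j k. j < k \<Longrightarrow> k \<le> n \<Longrightarrow> v j k \<in> lev X 2 \<and> fc X 2 [0,2] (v j k) = A j k \<and> fc X 2 [1,2] (v j k) = A (Suc j) k"
    and Ss: "\<And>j k. j < k \<Longrightarrow> k < n \<Longrightarrow> sqp (h j k) (h (Suc j) k) (v j k) (v j (Suc k))"
    and SuA: "\<And>j k. \<not> (j \<le> k \<and> k \<le> n) \<Longrightarrow> A j k = undefined"
    and Suh: "\<And>j k. \<not> (j \<le> k \<and> k < n) \<Longrightarrow> h j k = undefined"
    and Suv: "\<And>j k. \<not> (j < k \<and> k \<le> n) \<Longrightarrow> v j k = undefined"
  using assms unfolding Ssq_lev_def DD_simps Hc_simps homH homV by auto

lemma Fm_eqI: assumes g: "(A,h,v) \<in> Ssq_lev DD Zo n" and x: "x \<in> lev X n"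
  and eA: "\<And>j k. j < k \<Longrightarrow> k \<le> n \<Longrightarrow> fc X n [j,k] x = A j k"
  and eh: "\<And>j k. j < k \<Longrightarrow> k < n \<Longrightarrow> fc X n [j,k,Suc k] x = h j k"
  and ev: "\<And>j k. Suc j < k \<Longrightarrow> k \<le> n \<Longrightarrow> fc X n [j,Suc j,k] x = v j k"
  shows "Fm n x = (A,h,v)"
proof -
  have eA': "fc X n [j,k] x = A j k" if "j \<le> k" "k \<le> n" for j k
  proof (cases "j = k")
    case True then show ?thesis using that x SZ[OF g] by simp
  qed (use that eA in simp)
  have eh': "fc X n [j,k,Suc k] x = h j k" if "j \<le> k" "k < n" for j k
  proof (cases "j = k")
    case True
    have "h k k \<in> hom Hc Zo (A k (Suc k))" using Sh[OF g, of k k] SZ[OF g, of k] that by (simp add: homH)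
    then have "h k k = fc X 1 [0,0,1] (A k (Suc k))" by (rule initH)
    also have "\<dots> = fc X 1 [0,0,1] (fc X n [k, Suc k] x)" using eA' that by simp
    also have "\<dots> = fc X n [k,k,Suc k] x" using x that by simp
    finally show ?thesis using True by simp
  qed (use that eh in simp)
  have ev': "fc X n [j,Suc j,k] x = v j k" if "j < k" "k \<le> n" for j k
  proof (cases "k = Suc j")
    case True
    have "v j k \<in> hom Vc (A j k) Zo" using Sv[OF g, of j k] SZ[OF g, of k] that True by (simp add: homV)
    then have "v j k = fc X 1 [0,1,1] (A j k)" by (rule termV)
    also have "\<dots> = fc X 1 [0,1,1] (fc X n [j, k] x)" using eA' that by simp
    also have "\<dots> = fc X n [j,k,k] x" using x that by simp
    finally show ?thesis using True by simp
  qed (use that ev in simp)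
  have 1: "FA n x = A"
  proof (intro ext)
    fix j k show "FA n x j k = A j k" using eA' SuA[OF g, of j k] by (auto simp: FA_def)
  qed
  have 2: "Fh n x = h"
  proof (intro ext)
    fix j k show "Fh n x j k = h j k" using eh' Suh[OF g, of j k] by (auto simp: Fh_def)
  qed
  have 3: "Fv n x = v"
  proof (intro ext)
    fix j k show "Fv n x j k = v j k" using ev' Suv[OF g, of j k] by (auto simp: Fv_def)
  qed
  show ?thesis unfolding Fm_def 1 2 3 ..
qed


lemma surj_step:
  assumes n2: "2 \<le> n" and nm: "n = Suc m"
    and IH: "\<And>g'. g' \<in> Ssq_lev DD Zo m \<Longrightarrow> \<exists>y\<in>lev X m. Fm m y = g'"
    and g: "(A,h,v) \<in> Ssq_lev DD Zo n"
  shows "\<exists>x\<in>lev X n. Fm n x = (A,h,v)"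
proof -
  have mn: "n - 1 = m" "m < n" and m1: "1 \<le> m" using nm n2 by auto
  define A' where "A' = (\<lambda>j k. if j \<le> k \<and> k \<le> m then A j k else undefined)"
  define h' where "h' = (\<lambda>j k. if j \<le> k \<and> k < m then h j k else undefined)"
  define v' where "v' = (\<lambda>j k. if j < k \<and> k \<le> m then v j k else undefined)"
  have g': "(A',h',v') \<in> Ssq_lev DD Zo m"
    unfolding Ssq_lev_def DD_simps Hc_simps homH homV mem_Collect_eq prod.case
    using SA[OF g] SZ[OF g] Sh[OF g] Sv[OF g] Ss[OF g] mn by (auto simp: A'_def h'_def v'_def)
  obtain y where y: "y \<in> lev X m" "Fm m y = (A',h',v')" using IH[OF g'] by blast
  have yA: "fc X m [j,k] y = A j k" if "j \<le> k" "k \<le> m" for j k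
    using fun_cong[OF fun_cong[OF arg_cong[OF y(2), of fst]], of j k] that by (simp add: Fm_def FA_def A'_def)
  have yh: "fc X m [j,k,Suc k] y = h j k" if "j \<le> k" "k < m" for j k
    using fun_cong[OF fun_cong[OF arg_cong[OF y(2), of "\<lambda>p. fst (snd p)"]], of j k] that by (simp add: Fm_def Fh_def h'_def)
  have yv: "fc X m [j,Suc j,k] y = v j k" if "j < k" "k \<le> m" for j k
    using fun_cong[OF fun_cong[OF arg_cong[OF y(2), of "\<lambda>p. snd (snd p)"]], of j k] that by (simp add: Fm_def Fv_def v'_def)
  have hm: "h 0 m \<in> lev X 2" "fc X 2 [0,1] (h 0 m) = A 0 m" "fc X 2 [0,2] (h 0 m) = A 0 n"
    using Sh[OF g, of 0 m] mn nm by auto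
  have y1: "y \<in> lev X (n - 1)" using y(1) mn by simp
  have c: "fc X (n - 1) [0, n - 1] y = fc X 2 [0,1] (h 0 m)" using yA[of 0 m] hm mn by simp
  obtain x where x: "x \<in> lev X n" "fc X n [0..<n] x = y" "fc X n [0,n-1,n] x = h 0 m"
    using Sn[OF n2 y1 hm(1) c] by blast
  have x3: "fc X n [0,m,n] x = h 0 m" using x(3) mn by simp
  have xr: "fc X n l x = fc X m l y" if "okl l m" for l
    using restr[OF x(1), of l] that mn x(2) by simp
  have xA: "fc X n [j,k] x = A j k" if "j \<le> k" "k \<le> m" for j k
    using xr[of "[j,k]"] yA[of j k] that by simp
  have xh: "fc X n [j,k,Suc k] x = h j k" if "j \<le> k" "k < m" for j k
    using xr[of "[j,k,Suc k]"] yh[of j k] that by simp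
  have xv: "fc X n [j,Suc j,k] x = v j k" if "j < k" "k \<le> m" for j k
    using xr[of "[j,Suc j,k]"] yv[of j k] that by simp
  have cell: "fc X n [Suc j,m,n] x = h (Suc j) m \<and> fc X n [j,Suc j,n] x = v j n"
    if j: "j < m" and IHj: "fc X n [j,m,n] x = h j m" for j
  proof -
    obtain w where w: "w \<in> lev X 3" "fc X 3 [0,2,3] w = h j m" "fc X 3 [1,2,3] w = h (Suc j) m"
      "fc X 3 [0,1,2] w = v j m" "fc X 3 [0,1,3] w = v j n"
      using Ss[OF g, of j m] j mn nm unfolding sqp_def by auto
    define z where "z = fc X n [j,Suc j,m,n] x"
    have z: "z \<in> lev X 3" unfolding z_def using x(1) j mn by (intro fc_in) auto
    have "fc X 3 [0,1,2] z = fc X n [j,Suc j,m] x" unfolding z_def using x(1) j mn by simp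
    also have "\<dots> = v j m" using xv[of j m] j by simp
    finally have z1: "fc X 3 [0,1,2] z = fc X 3 [0,1,2] w" using w by simp
    have "fc X 3 [0,2,3] z = fc X n [j,m,n] x" unfolding z_def using x(1) j mn by simp
    then have z2: "fc X 3 [0,2,3] z = fc X 3 [0,2,3] w" using w IHj by simp
    have zw: "z = w" by (rule S3a_un[OF z w(1) z1 z2])
    have "fc X n [Suc j,m,n] x = fc X 3 [1,2,3] z" unfolding z_def using x(1) j mn by simp
    moreover have "fc X n [j,Suc j,n] x = fc X 3 [0,1,3] z" unfolding z_def using x(1) j mn by simp
    ultimately show ?thesis using zw w by simp
  qed
  have H: "j \<le> m \<Longrightarrow> fc X n [j,m,n] x = h j m" for j
  proof (induction j)
    case 0 then show ?case using x3 by simp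
  next
    case (Suc j) then show ?case using cell[of j] by simp
  qed
  have "Fm n x = (A,h,v)"
  proof (rule Fm_eqI[OF g x(1)])
    fix j k assume jk: "j < k" "k \<le> n"
    show "fc X n [j,k] x = A j k"
    proof (cases "k \<le> m")
      case True then show ?thesis using xA jk by simp
    next
      case False
      then have kn: "k = n" "j \<le> m" using jk nm by auto
      have "fc X n [j,n] x = fc X 2 [0,2] (fc X n [j,m,n] x)" using x(1) kn mn by simp
      also have "\<dots> = A j n" using H[OF kn(2)] Sh[OF g, of j m] kn mn nm by simp
      finally show ?thesis using kn by simp
    qed
  next
    fix j k assume jk: "j < k" "k < n"
    show "fc X n [j,k,Suc k] x = h j k"
    proof (cases "k < m")
      case True then show ?thesis using xh jk by simp
    next
      case False
      then have "k = m" using jk nm by auto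
      then show ?thesis using H[of j] jk nm by simp
    qed
  next
    fix j k assume jk: "Suc j < k" "k \<le> n"
    show "fc X n [j,Suc j,k] x = v j k"
    proof (cases "k \<le> m")
      case True then show ?thesis using xv jk by simp
    next
      case False
      then have kn: "k = n" "j < m" using jk nm by auto
      then show ?thesis using cell[OF kn(2) H[of j]] by simp
    qed
  qed
  then show ?thesis using x(1) by blast
qed

lemma Fm_surj: "g \<in> Ssq_lev DD Zo n \<Longrightarrow> \<exists>x\<in>lev X n. Fm n x = g"
proof (induction n arbitrary: g)
  case 0
  obtain A h v where g: "g = (A,h,v)" by (cases g) auto
  have "Fm 0 pt = (A,h,v)" by (rule Fm_eqI) (use 0 g in auto)
  then show ?case using g by auto
next
  case (Suc m)
  obtain A h v where g: "g = (A,h,v)" by (cases g) auto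
  show ?case
  proof (cases m)
    case 0
    have a: "A 0 1 \<in> lev X 1" using SA[of A h v 1 0 1] Suc.prems g 0 by simp
    have "Fm 1 (A 0 1) = (A,h,v)"
    proof (rule Fm_eqI)
      show "(A, h, v) \<in> Ssq_lev DD Zo 1" using Suc.prems g 0 by simp
      show "A 0 1 \<in> lev X 1" by (rule a)
      fix j k assume "j < k" "k \<le> (1::nat)"
      then have "j = 0" "k = 1" by auto
      then show "fc X 1 [j,k] (A 0 1) = A j k" using a by simp
    qed auto
    then show ?thesis using a g 0 by auto
  next
    case (Suc m')
    then show ?thesis using surj_step[of "Suc m" m A h v] Suc.IH Suc.prems g by simp
  qed
qed

end

theorem corollary3p7:
  fixes X :: "'x sset"
  assumes "is_sset X" and "two_segal X" and "reduced X"
  shows "\<exists>(D :: ('x, 'x, 'x) dbl) (Z :: 'x) f.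
           squares_category D Z \<and> sset_iso X (Ssq D Z) f"
proof -
  interpret seg X using assms by unfold_locales
  have iso: "sset_iso X (Ssq DD Zo) Fm"
    unfolding sset_iso_def Ssq_def sset.simps
  proof (intro conjI allI impI ballI)
    fix n
    show "bij_betw (Fm n) (lev X n) (Ssq_lev DD Zo n)"
      unfolding bij_betw_def
    proof
      show "inj_on (Fm n) (lev X n)"
      proof (rule inj_onI)
        fix x x' assume x: "x \<in> lev X n" "x' \<in> lev X n" and e: "Fm n x = Fm n x'"
        then have "Fh n x = Fh n x'" by (simp add: Fm_def)
        then have FF: "Fh n x 0 k = Fh n x' 0 k" for k by simp
        have "fc X n [0,k,Suc k] x = fc X n [0,k,Suc k] x'" if "k < n" for k
          using FF[of k] that unfolding Fh_def by simp
        then show "x = x'" using Fm_inj[OF x] by blast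
      qed
      show "Fm n ` lev X n = Ssq_lev DD Zo n"
        using Fm_in Fm_surj by blast
    qed
  next
    fix \<theta> m n x assume "simp_op \<theta> m n" "x \<in> lev X n"
    then show "Fm m (smap X \<theta> m n x) = Ssq_map DD \<theta> m n (Fm n x)" by (rule natural)
  qed
  show ?thesis using sqcat iso by blast
qed

end
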